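(* Let $M$ be a $\lambda$-term. If $M$ is typable in the system $E^S_A$ (i.e. some judgment $\Delta\vdash M:a$ is derivable), then the head reduction of $M$ ends.
   Context: $[n]=\{1,\dots,n\}$. Fix a class $\mathcal C$ of functions between finite ordinals equal to one of: all bijections, all injections, all surjections, all functions. For a small category $X$, $SX$ has finite lists of objects of $X$ as objects and morphisms $\langle x_1,\dots,x_n\rangle\to\langle y_1,\dots,y_m\rangle$ the tuples $\langle\alpha,f_1,\dots,f_m\rangle$ with $\alpha:[m]\to[n]$ in $\mathcal C$, $f_i:x_{\alpha(i)}\to y_i$; composite of $\langle\alpha,\vec f\rangle$ then $\langle\beta,\vec g\rangle$ is $\langle\alpha\circ\beta,(g_i\circ f_{\beta(i)})_i\rangle$; tensor $\oplus$ = concatenation, unit $\langle\rangle$. Fix a small category $A$. $D=D_A$ is the colimit of $D_0=A$, $D_{k+1}=(SD_k)^{o}\times D_k\sqcup A$: objects $a::=o\mid\langle a_1,\dots,a_k\rangle\Rightarrow a$ ($o\in\mathrm{Ob}(A)$); morphisms are those of $A$ and $\langle\alpha,\vec f\rangle\Rightarrow f:(\vec a\Rightarrow a)\to(\vec a'\Rightarrow a')$ for $\langle\alpha,\vec f\rangle:\vec a'\to\vec a$ in $SD$, $f:a\to a'$. $SD=S(D_A)$. Contexts are $\Delta=\langle\vec a_1,\dots,\vec a_n\rangle\in(SD)^n$, written $x_1:\vec a_1,\dots,x_n:\vec a_n$; $\otimes$ is componentwise concatenation. Type system $E^S_A$: (Var) given morphisms $f_j:\vec a_j\to\langle\rangle$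 ($j\ne i$) and $f_i:\vec a_i\to\langle a\rangle$ in $SD$, infer $x_1:\vec a_1,\dots,x_n:\vec a_n\vdash x_i:a$; (Abs) from $\Delta,x:\vec a\vdash M:a$ infer $\Delta\vdash\lambda x.M:\vec a\Rightarrow a$; (App) from $\Gamma_0\vdash M:\langle a_1,\dots,a_k\rangle\Rightarrow a$, $\Gamma_i\vdash N:a_i$ ($1\le i\le k$) and a morphism $\eta:\Delta\to\bigotimes_{i=0}^k\Gamma_i$ in $(SD)^n$, infer $\Delta\vdash MN:a$. Head reduction: $H(M)=M$ if $M=\lambda\vec y.\,y\vec N$, and $H(M)=\lambda\vec y.\,P[N/x]\vec N$ if $M=\lambda\vec y.(\lambda x.P)N\vec N$; the head reduction of $M$ ends if iterating $H$ reaches a term $M'$ with $H(M')=M'$. *)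

theory Defs
  imports Main
begin

record ('o, 'm) cat =
  Obj  :: "'o set"
  Hom  :: "'o \<Rightarrow> 'o \<Rightarrow> 'm set"
  Idt  :: "'o \<Rightarrow> 'm"
  Comp :: "'m \<Rightarrow> 'm \<Rightarrow> 'm"   (* Comp g f = g \<circ> f *)

definition is_category :: "('o, 'm) cat \<Rightarrow> bool" where
  "is_category A \<longleftrightarrow>
     (\<forall>x\<in>Obj A. Idt A x \<in> Hom A x x) \<and>
     (\<forall>x\<in>Obj A. \<forall>y\<in>Obj A. \<forall>z\<in>Obj A. \<forall>f\<in>Hom A x y. \<forall>g\<in>Hom A y z.
          Comp A g f \<in> Hom A x z) \<and>
     (\<forall>x\<in>Obj A. \<forall>y\<in>Obj A. \<forall>f\<in>Hom A x y.
          Comp A f (Idt A x) = f \<and> Comp A (Idt A y) f = f) \<and>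
     (\<forall>w\<in>Obj A. \<forall>x\<in>Obj A. \<forall>y\<in>Obj A. \<forall>z\<in>Obj A.
        \<forall>f\<in>Hom A w x. \<forall>g\<in>Hom A x y. \<forall>h\<in>Hom A y z.
          Comp A h (Comp A g f) = Comp A (Comp A h g) f)"

text \<open>A map alpha : [m] \<rightarrow> [n] is represented 0-based as a list of length m
  with entries < n (entry i is the image of i+1, minus 1).\<close>

datatype cls = Bijections | Injections | Surjections | AllFunctions

definition in_C :: "cls \<Rightarrow> nat list \<Rightarrow> nat \<Rightarrow> nat \<Rightarrow> bool" where
  "in_C c \<alpha> m n \<longleftrightarrow> length \<alpha> = m \<and> (\<forall>i<m. \<alpha> ! i < n) \<and>
     (case c of
        Bijections \<Rightarrow> bij_betw (\<lambda>i. \<alpha> ! i) {..<m} {..<n}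
      | Injections \<Rightarrow> inj_on (\<lambda>i. \<alpha> ! i) {..<m}
      | Surjections \<Rightarrow> (\<lambda>i. \<alpha> ! i) ` {..<m} = {..<n}
      | AllFunctions \<Rightarrow> True)"

datatype 'o ty = Base 'o | Arr "'o ty list" "'o ty"

fun ob :: "('o, 'm) cat \<Rightarrow> 'o ty \<Rightarrow> bool" where
  "ob A (Base x) \<longleftrightarrow> x \<in> Obj A"
| "ob A (Arr as a) \<longleftrightarrow> (\<forall>b\<in>set as. ob A b) \<and> ob A a"

datatype 'm dmor = AMor 'm | ArrMor "nat list" "'m dmor list" "'m dmor"

inductive dhom :: "cls \<Rightarrow> ('o, 'm) cat \<Rightarrow> 'm dmor \<Rightarrow> 'o ty \<Rightarrow> 'o ty \<Rightarrow> bool"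
  for c A where
  amor: "x \<in> Obj A \<Longrightarrow> y \<in> Obj A \<Longrightarrow> f \<in> Hom A x y
         \<Longrightarrow> dhom c A (AMor f) (Base x) (Base y)"
| arrmor: "\<forall>b\<in>set as. ob A b \<Longrightarrow> \<forall>b\<in>set as'. ob A b
         \<Longrightarrow> in_C c \<alpha> (length as) (length as') \<Longrightarrow> length fs = length as
         \<Longrightarrow> (\<forall>i<length as. dhom c A (fs ! i) (as' ! (\<alpha> ! i)) (as ! i))
         \<Longrightarrow> dhom c A f a a'
         \<Longrightarrow> dhom c A (ArrMor \<alpha> fs f) (Arr as a) (Arr as' a')"
  (* <alpha, fs> : as' \<rightarrow> as in S(D_A), f : a \<rightarrow> a' *)

definition shom :: "cls \<Rightarrow> ('o, 'm) cat \<Rightarrow> nat list \<times> 'm dmor list \<Rightarrow> 'o ty list \<Rightarrow> 'o ty list \<Rightarrow> bool" where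
  "shom c A \<phi> xs ys \<longleftrightarrow> (\<forall>b\<in>set xs. ob A b) \<and> (\<forall>b\<in>set ys. ob A b) \<and>
     in_C c (fst \<phi>) (length ys) (length xs) \<and> length (snd \<phi>) = length ys \<and>
     (\<forall>i<length ys. dhom c A (snd \<phi> ! i) (xs ! (fst \<phi> ! i)) (ys ! i))"

definition has_shom :: "cls \<Rightarrow> ('o, 'm) cat \<Rightarrow> 'o ty list \<Rightarrow> 'o ty list \<Rightarrow> bool" where
  "has_shom c A xs ys \<longleftrightarrow> (\<exists>\<phi>. shom c A \<phi> xs ys)"

text \<open>A context is a list of objects of S(D_A), one per variable (de Bruijn:
  index 0 = head of the list = most recently bound variable).\<close>

definition ctx_ok :: "('o, 'm) cat \<Rightarrow> 'o ty list list \<Rightarrow> bool" where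
  "ctx_ok A \<Delta> \<longleftrightarrow> (\<forall>as\<in>set \<Delta>. \<forall>b\<in>set as. ob A b)"

definition ctx_hom :: "cls \<Rightarrow> ('o, 'm) cat \<Rightarrow> 'o ty list list \<Rightarrow> 'o ty list list \<Rightarrow> bool" where
  "ctx_hom c A \<Delta> \<Delta>' \<longleftrightarrow> length \<Delta> = length \<Delta>' \<and>
     (\<forall>j<length \<Delta>. has_shom c A (\<Delta> ! j) (\<Delta>' ! j))"

definition ctx_tensor :: "nat \<Rightarrow> 'o ty list list list \<Rightarrow> 'o ty list list" where
  "ctx_tensor n \<Gamma>s = map (\<lambda>j. concat (map (\<lambda>\<Gamma>. \<Gamma> ! j) \<Gamma>s)) [0..<n]"

datatype tm = Var nat | Lam tm | App tm tm

fun lift :: "nat \<Rightarrow> tm \<Rightarrow> tm" where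
  "lift k (Var i) = (if i < k then Var i else Var (Suc i))"
| "lift k (Lam M) = Lam (lift (Suc k) M)"
| "lift k (App M N) = App (lift k M) (lift k N)"

text \<open>subst M k N = M[N/k], removing index k.\<close>
fun subst :: "tm \<Rightarrow> nat \<Rightarrow> tm \<Rightarrow> tm" where
  "subst (Var i) k N = (if i < k then Var i else if i = k then N else Var (i - 1))"
| "subst (Lam M) k N = Lam (subst M (Suc k) (lift 0 N))"
| "subst (App M1 M2) k N = App (subst M1 k N) (subst M2 k N)"

fun H :: "tm \<Rightarrow> tm" where
  "H (Var i) = Var i"
| "H (Lam M) = Lam (H M)"
| "H (App (Lam P) N) = subst P 0 N"
| "H (App M N) = App (H M) N"

definition head_red_ends :: "tm \<Rightarrow> bool" where
  "head_red_ends M \<longleftrightarrow> (\<exists>k. H ((H ^^ k) M) = (H ^^ k) M)"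

inductive typed :: "cls \<Rightarrow> ('o, 'm) cat \<Rightarrow> 'o ty list list \<Rightarrow> tm \<Rightarrow> 'o ty \<Rightarrow> bool"
  for c A where
  var: "i < length \<Delta> \<Longrightarrow> ctx_ok A \<Delta>
        \<Longrightarrow> (\<forall>j<length \<Delta>. j \<noteq> i \<longrightarrow> has_shom c A (\<Delta> ! j) [])
        \<Longrightarrow> has_shom c A (\<Delta> ! i) [a]
        \<Longrightarrow> typed c A \<Delta> (Var i) a"
| abs: "typed c A (as # \<Delta>) M a \<Longrightarrow> typed c A \<Delta> (Lam M) (Arr as a)"
| app: "typed c A \<Gamma>0 M (Arr as a) \<Longrightarrow> length \<Gamma>s = length as
        \<Longrightarrow> (\<forall>i<length as. typed c A (\<Gamma>s ! i) N (as ! i))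
        \<Longrightarrow> length \<Gamma>0 = length \<Delta> \<Longrightarrow> (\<forall>\<Gamma>\<in>set \<Gamma>s. length \<Gamma> = length \<Delta>)
        \<Longrightarrow> ctx_ok A \<Delta>
        \<Longrightarrow> ctx_hom c A \<Delta> (ctx_tensor (length \<Delta>) (\<Gamma>0 # \<Gamma>s))
        \<Longrightarrow> typed c A \<Delta> (App M N) a"

end

theory Submission
  imports Defs
begin

lemma lift_lift:
  "i < k + 1 \<Longrightarrow> lift (Suc k) (lift i t) = lift i (lift k t)"
  by (induct t arbitrary: i k) auto

lemma lift_subst [simp]:
  "j < i + 1 \<Longrightarrow> lift i (subst t j s) = subst (lift (i + 1) t) j (lift i s)"
  by (induct t arbitrary: i j s) (simp_all add: diff_Suc split: nat.split, auto simp: lift_lift)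

lemma lift_subst_lt:
  "i < j + 1 \<Longrightarrow> lift i (subst t j s) = subst (lift i t) (j + 1) (lift i s)"
  by (induct t arbitrary: i j s) (auto simp: lift_lift)

lemma subst_lift [simp]: "subst (lift k t) k s = t"
  by (induct t arbitrary: k s) simp_all

lemma subst_subst:
  "i < j + 1 \<Longrightarrow> subst (subst t (Suc j) (lift i v)) i (subst u j v) = subst (subst t i u) j v"
proof (induct t arbitrary: i j u v)
  case (Lam t)
  have e1: "lift 0 (lift i v) = lift (Suc i) (lift 0 v)" using lift_lift[of 0 i v] by simp
  have e2: "subst (lift 0 u) (Suc j) (lift 0 v) = lift 0 (subst u j v)"
    using lift_subst_lt[of 0 j u v] by simp
  show ?case using Lam.hyps[where i="Suc i" and j="Suc j" and u="lift 0 u" and v="lift 0 v"] Lam.prems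
    by (simp add: e1 e2[symmetric])
qed (simp_all add: diff_Suc split: nat.split)

inductive hr :: "tm \<Rightarrow> bool" where
  "hr (App (Lam P) Q)"
| "hr M \<Longrightarrow> hr (App M N)"
| "hr M \<Longrightarrow> hr (Lam M)"

lemma not_hr_fix: "\<not> hr Q \<Longrightarrow> H Q = Q"
proof (induct Q)
  case (App M N)
  then show ?case by (cases M) (auto intro: hr.intros)
qed (auto intro: hr.intros)

lemma hr_subst: "hr Q \<Longrightarrow> hr (subst Q k N)"
proof (induct Q arbitrary: k N rule: hr.induct)
  case (1 P Q) then show ?case by (auto intro: hr.intros)
next
  case (2 M N') then show ?case by (auto intro: hr.intros)
next
  case (3 M) then show ?case by (auto intro: hr.intros)
qed

lemma H_subst: "hr Q \<Longrightarrow> H (subst Q k N) = subst (H Q) k N"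
proof (induct Q arbitrary: k N rule: hr.induct)
  case (1 P Q) then show ?case using subst_subst[of 0 k P N Q] by simp
next
  case (2 M N')
  show ?case
  proof (cases M)
    case (Var x) then show ?thesis using 2 by (auto elim: hr.cases)
  next
    case (Lam P) then show ?thesis using subst_subst[of 0 k P N N'] by simp
  next
    case (App M1 M2) then show ?thesis using 2 by simp
  qed
next
  case (3 M) then show ?case by simp
qed

definition HN :: "tm \<Rightarrow> bool" where
  "HN M \<longleftrightarrow> (\<exists>n. \<not> hr ((H ^^ n) M))"

lemma HN_subst: "HN (subst P k N) \<Longrightarrow> HN P"
proof (rule ccontr)
  assume a: "HN (subst P k N)" and b: "\<not> HN P"
  then have h: "\<forall>n. hr ((H ^^ n) P)" unfolding HN_def by auto
  have e: "(H ^^ n) (subst P k N) = subst ((H ^^ n) P) k N" for n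
    by (induct n) (auto simp: H_subst h)
  from a obtain n where "\<not> hr ((H ^^ n) (subst P k N))" unfolding HN_def by auto
  then show False using e[of n] hr_subst h by metis
qed

lemma H_Lam_pow: "(H ^^ n) (Lam P) = Lam ((H ^^ n) P)"
  by (induct n) auto

lemma HN_Lam: "HN P \<Longrightarrow> HN (Lam P)"
  unfolding HN_def H_Lam_pow by (auto elim: hr.cases)

lemma HN_H: "HN (H M) \<Longrightarrow> HN M"
  unfolding HN_def by (metis funpow_Suc_right o_apply)

lemma HN_fix: "HN M \<Longrightarrow> head_red_ends M"
  unfolding HN_def head_red_ends_def using not_hr_fix by blast

inductive wh :: "tm \<Rightarrow> bool" where
  "wh (App (Lam P) Q)"
| "wh M \<Longrightarrow> wh (App M N)"

lemma wh_H: "wh M \<Longrightarrow> H (App M N) = App (H M) N"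
  by (induct rule: wh.induct) auto

inductive ne :: "tm \<Rightarrow> bool" where
  "ne (Var i)"
| "ne M \<Longrightarrow> ne (App M N)"

lemma ne_not_hr: "ne M \<Longrightarrow> \<not> hr M"
  by (induct rule: ne.induct) (auto elim: hr.cases ne.cases)

lemma ne_HN: "ne M \<Longrightarrow> HN M"
  unfolding HN_def using ne_not_hr by (metis funpow_0)

section \<open>Reducibility\<close>

fun R :: "'o ty \<Rightarrow> tm \<Rightarrow> bool" where
  "R (Base x) M = HN M"
| "R (Arr as a) M = (HN M \<and> (\<forall>N. (\<forall>b\<in>set as. R b N) \<longrightarrow> R a (App M N)))"

lemma R_HN: "R a M \<Longrightarrow> HN M"
  by (cases a) auto

lemma R_ne: "ne M \<Longrightarrow> R a M"
proof (induct a arbitrary: M)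
  case (Base x) then show ?case by (simp add: ne_HN)
next
  case (Arr as a) then show ?case by (simp add: ne_HN ne.intros)
qed

lemma R_exp: "wh M \<Longrightarrow> R a (H M) \<Longrightarrow> R a M"
proof (induct a arbitrary: M)
  case (Base x) then show ?case by (simp add: HN_H)
next
  case (Arr as a)
  then show ?case by (auto simp: HN_H wh_H wh.intros)
qed

lemma R_mono: "dhom c A f a b \<Longrightarrow> R a M \<Longrightarrow> R b M"
proof (induct arbitrary: M rule: dhom.induct)
  case (amor x y f) then show ?case by simp
next
  case (arrmor as as' \<alpha> fs f a a')
  show ?case
  proof (simp, intro conjI allI impI)
    show "HN M" using arrmor.prems by simp
  next
    fix N assume N: "\<forall>b\<in>set as'. R b N"
    have "\<forall>b\<in>set as. R b N"
    proof
      fix b assume "b \<in> set as"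
      then obtain i where i: "i < length as" "b = as ! i" by (auto simp: in_set_conv_nth)
      have "\<alpha> ! i < length as'" using arrmor.hyps(3) i unfolding in_C_def by auto
      then have "R (as' ! (\<alpha> ! i)) N" using N by simp
      then show "R b N" using arrmor.hyps(5) i by auto
    qed
    then have "R a (App M N)" using arrmor.prems by simp
    then show "R a' (App M N)" using arrmor.hyps(7) by simp
  qed
qed

definition ext :: "(nat \<Rightarrow> tm) \<Rightarrow> nat \<Rightarrow> tm" where
  "ext \<sigma> j = (case j of 0 \<Rightarrow> Var 0 | Suc j' \<Rightarrow> lift 0 (\<sigma> j'))"

definition cons :: "tm \<Rightarrow> (nat \<Rightarrow> tm) \<Rightarrow> nat \<Rightarrow> tm" where
  "cons N \<sigma> j = (case j of 0 \<Rightarrow> N | Suc j' \<Rightarrow> \<sigma> j')"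

fun ms :: "(nat \<Rightarrow> tm) \<Rightarrow> tm \<Rightarrow> tm" where
  "ms \<sigma> (Var i) = \<sigma> i"
| "ms \<sigma> (Lam M) = Lam (ms (ext \<sigma>) M)"
| "ms \<sigma> (App M N) = App (ms \<sigma> M) (ms \<sigma> N)"

lemma ext_Var: "ext Var = Var"
  by (auto simp: ext_def fun_eq_iff split: nat.split)

lemma ms_Var: "ms Var M = M"
  by (induct M) (auto simp: ext_Var)

lemma subst_ms: "subst (ms \<sigma> M) k N = ms (\<lambda>j. subst (\<sigma> j) k N) M"
proof (induct M arbitrary: \<sigma> k N)
  case (Lam M)
  have "(\<lambda>j. subst (ext \<sigma> j) (Suc k) (lift 0 N)) = ext (\<lambda>j. subst (\<sigma> j) k N)"
    by (auto simp: ext_def fun_eq_iff lift_subst_lt split: nat.split)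
  then show ?case using Lam by simp
qed auto

lemma subst_ms_ext: "subst (ms (ext \<sigma>) M) 0 N = ms (cons N \<sigma>) M"
proof -
  have "(\<lambda>j. subst (ext \<sigma> j) 0 N) = cons N \<sigma>"
    by (auto simp: ext_def cons_def fun_eq_iff split: nat.split)
  then show ?thesis by (simp add: subst_ms)
qed

lemma fund:
  "typed c A \<Delta> M a \<Longrightarrow> (\<forall>j<length \<Delta>. \<forall>b\<in>set (\<Delta> ! j). R b (\<sigma> j)) \<Longrightarrow> R a (ms \<sigma> M)"
proof (induct arbitrary: \<sigma> rule: typed.induct)
  case (var i \<Delta> a)
  then obtain \<phi> where "shom c A \<phi> (\<Delta> ! i) [a]" unfolding has_shom_def by auto
  then have d: "dhom c A (snd \<phi> ! 0) ((\<Delta> ! i) ! (fst \<phi> ! 0)) a" and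
    l: "fst \<phi> ! 0 < length (\<Delta> ! i)"
    unfolding shom_def in_C_def by auto
  have "R ((\<Delta> ! i) ! (fst \<phi> ! 0)) (\<sigma> i)" using var l by auto
  then show ?case using R_mono[OF d] by simp
next
  case (abs as \<Delta> M a)
  let ?P = "ms (ext \<sigma>) M"
  have c: "\<forall>j<length (as # \<Delta>). \<forall>b\<in>set ((as # \<Delta>) ! j). R b (cons N \<sigma> j)"
    if "\<forall>b\<in>set as. R b N" for N
    using abs.prems that by (auto simp: cons_def nth_Cons split: nat.split)
  have "R a (ms (cons (Var 0) \<sigma>) M)"
    using abs.hyps(2) c[of "Var 0"] by (simp add: R_ne ne.intros)
  then have "HN (subst ?P 0 (Var 0))" by (simp add: subst_ms_ext R_HN)
  then have hn: "HN (Lam ?P)" using HN_subst HN_Lam by blast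
  have "R a (App (Lam ?P) N)" if "\<forall>b\<in>set as. R b N" for N
  proof (rule R_exp)
    show "wh (App (Lam ?P) N)" by (rule wh.intros)
    show "R a (H (App (Lam ?P) N))" using abs.hyps(2) c[OF that] by (simp add: subst_ms_ext)
  qed
  then show ?case using hn by simp
next
  case (app \<Gamma>0 M as a \<Gamma>s N \<Delta>)
  have key: "R y (\<sigma> j)" if j: "j < length \<Delta>" and
    y: "y \<in> set (concat (map (\<lambda>\<Gamma>. \<Gamma> ! j) (\<Gamma>0 # \<Gamma>s)))" for j y
  proof -
    have "has_shom c A (\<Delta> ! j) (ctx_tensor (length \<Delta>) (\<Gamma>0 # \<Gamma>s) ! j)"
      using app.hyps(8) j unfolding ctx_hom_def by auto
    then have "has_shom c A (\<Delta> ! j) (concat (map (\<lambda>\<Gamma>. \<Gamma> ! j) (\<Gamma>0 # \<Gamma>s)))"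
      using j unfolding ctx_tensor_def by simp
    then obtain \<phi> where sh: "shom c A \<phi> (\<Delta> ! j) (concat (map (\<lambda>\<Gamma>. \<Gamma> ! j) (\<Gamma>0 # \<Gamma>s)))"
      unfolding has_shom_def by auto
    obtain i where i: "i < length (concat (map (\<lambda>\<Gamma>. \<Gamma> ! j) (\<Gamma>0 # \<Gamma>s)))"
      "y = concat (map (\<lambda>\<Gamma>. \<Gamma> ! j) (\<Gamma>0 # \<Gamma>s)) ! i"
      using y by (metis in_set_conv_nth)
    have d: "dhom c A (snd \<phi> ! i) ((\<Delta> ! j) ! (fst \<phi> ! i)) y"
      and l: "fst \<phi> ! i < length (\<Delta> ! j)"
      using sh i unfolding shom_def in_C_def by auto
    have "R ((\<Delta> ! j) ! (fst \<phi> ! i)) (\<sigma> j)" using app.prems j l by auto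
    then show ?thesis using R_mono[OF d] by simp
  qed
  have "R (Arr as a) (ms \<sigma> M)"
    using app.hyps(2)[of \<sigma>] key app.hyps(5) by auto
  moreover have "R b (ms \<sigma> N)" if "b \<in> set as" for b
  proof -
    obtain i where i: "i < length as" "b = as ! i" using \<open>b \<in> set as\<close> by (metis in_set_conv_nth)
    have g: "\<Gamma>s ! i \<in> set \<Gamma>s" using i app.hyps(3) by auto
    have "R (as ! i) (ms \<sigma> N)"
      using app.hyps(4) i(1) key g app.hyps(6) by fastforce
    then show ?thesis using i by simp
  qed
  ultimately show ?case by simp
qed

theorem lemma8:
  fixes c :: cls and A :: "('o, 'm) cat" and \<Delta> :: "'o ty list list"
    and M :: tm and a :: "'o ty"
  assumes "is_category A"
    and "typed c A \<Delta> M a"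
  shows "head_red_ends M"
proof -
  have "R a (ms Var M)" using fund[OF assms(2), of Var] by (simp add: R_ne ne.intros)
  then show ?thesis by (simp add: ms_Var R_HN HN_fix)
qed

end
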